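(* Let $n \geqslant 14$ be an integer and let $X = \mathrm{A}_n$ or $X = \mathrm{S}_n$. Let $p_{\mathrm{intrans}}(X)$ denote the probability that two elements of $X$, chosen independently and uniformly at random, generate a subgroup contained in some intransitive maximal subgroup of $X$. Then $$p_{\mathrm{intrans}}(X) > \frac{1}{n} + \frac{0.93}{n^2}.$$
   Context: $\mathrm{S}_n$ and $\mathrm{A}_n$ denote the symmetric and alternating groups of degree $n$, acting naturally on $\{1,\dots,n\}$; "intransitive" refers to this natural action. *)

theory Defs
  imports "HOL-Algebra.Sym_Groups" "HOL-Algebra.Generated_Groups" Complex_Main
begin

definition maximal_subgroup :: "'a set \<Rightarrow> ('a, 'b) monoid_scheme \<Rightarrow> bool" where
  "maximal_subgroup M G \<longleftrightarrow> subgroup M G \<and> M \<noteq> carrier G \<and>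
     (\<forall>H. subgroup H G \<and> M \<subseteq> H \<longrightarrow> H = M \<or> H = carrier G)"

definition intransitive_on :: "nat \<Rightarrow> (nat \<Rightarrow> nat) set \<Rightarrow> bool" where
  "intransitive_on n M \<longleftrightarrow> (\<exists>i\<in>{1..n}. \<exists>j\<in>{1..n}. \<forall>h\<in>M. h i \<noteq> j)"

definition p_intrans :: "nat \<Rightarrow> (nat \<Rightarrow> nat) monoid \<Rightarrow> real" where
  "p_intrans n G =
     real (card {(x, y) \<in> carrier G \<times> carrier G.
              \<exists>M. maximal_subgroup M G \<and> intransitive_on n M \<and> generate G {x, y} \<subseteq> M})
     / real (card (carrier G)) ^ 2"

end

theory Submission
  imports Defs
begin



lemma halving:
  assumes fin: "finite H" and inv: "\<tau> \<circ> \<tau> = id" and cl: "\<And>p. p \<in> H \<Longrightarrow> \<tau> \<circ> p \<in> H"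
    and sw: "\<And>p. p \<in> H \<Longrightarrow> Q (\<tau> \<circ> p) \<longleftrightarrow> \<not> Q p"
  shows "card H = 2 * card {p\<in>H. Q p}"
proof -
  let ?A = "{p\<in>H. Q p}" and ?B = "{p\<in>H. \<not> Q p}"
  have bij: "bij_betw (\<lambda>p. \<tau> \<circ> p) ?A ?B"
  proof (rule bij_betw_byWitness[where f'="\<lambda>p. \<tau> \<circ> p"])
    show "\<forall>a\<in>?A. \<tau> \<circ> (\<tau> \<circ> a) = a" using inv by (simp add: comp_assoc[symmetric])
    show "\<forall>a\<in>?B. \<tau> \<circ> (\<tau> \<circ> a) = a" using inv by (simp add: comp_assoc[symmetric])
    show "(\<circ>) \<tau> ` ?A \<subseteq> ?B" using cl sw by auto
    show "(\<circ>) \<tau> ` ?B \<subseteq> ?A" using cl sw by auto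
  qed
  have "card ?A = card ?B" using bij_betw_same_card[OF bij] .
  moreover have "H = ?A \<union> ?B" by auto
  moreover have "card (?A \<union> ?B) = card ?A + card ?B"
    by (rule card_Un_disjoint) (use fin in auto)
  ultimately show ?thesis by simp
qed

lemma orbit_card:
  assumes fin: "finite H" and MH: "M \<subseteq> H" and cl: "\<And>k m. k \<in> H \<Longrightarrow> m \<in> M \<Longrightarrow> k \<circ> m \<in> H"
    and injk: "\<And>k. k \<in> H \<Longrightarrow> inj k"
    and tr: "\<And>y. y \<in> Y \<Longrightarrow> \<exists>k\<in>H. act k xzero = y"
    and act: "\<And>k m. k \<in> H \<Longrightarrow> m \<in> M \<Longrightarrow> act (k \<circ> m) xzero = act k xzero"
  shows "card Y * card M \<le> card H"
proof -
  define kk where "kk y = (SOME k. k \<in> H \<and> act k xzero = y)" for y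
  have kk: "kk y \<in> H \<and> act (kk y) xzero = y" if "y \<in> Y" for y
    unfolding kk_def using someI_ex[OF tr[OF that, unfolded Bex_def]] .
  have "inj_on (\<lambda>(y,m). kk y \<circ> m) (Y \<times> M)"
  proof (rule inj_onI, clarify)
    fix y m y' m' assume a: "y \<in> Y" "m \<in> M" "y' \<in> Y" "m' \<in> M" and e: "kk y \<circ> m = kk y' \<circ> m'"
    have "y = y'" using act[of "kk y" m] act[of "kk y'" m'] kk[OF a(1)] kk[OF a(3)] a e by metis
    moreover have "m = m'"
    proof
      fix z have "kk y (m z) = kk y (m' z)" using e \<open>y = y'\<close> by (metis comp_apply)
      then show "m z = m' z" using injk kk[OF a(1)] by (meson injD)
    qed
    ultimately show "y = y' \<and> m = m'" by simp
  qed
  moreover have "(\<lambda>(y,m). kk y \<circ> m) ` (Y \<times> M) \<subseteq> H" using kk cl by auto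
  ultimately have "card (Y \<times> M) \<le> card H" using card_inj_on_le fin by blast
  then show ?thesis by (simp add: card_cartesian_product)
qed

lemma bonferroni:
  fixes A :: "'i \<Rightarrow> 'a set"
  assumes finI: "finite I" and finA: "\<And>i. i \<in> I \<Longrightarrow> finite (A i)"
  shows "real (card (\<Union>i\<in>I. A i)) \<ge> (\<Sum>i\<in>I. real (card (A i)))
            - (\<Sum>i\<in>I. \<Sum>j\<in>I-{i}. real (card (A i \<inter> A j))) / 2"
proof -
  define U where "U = (\<Union>i\<in>I. A i)"
  have finU: "finite U" unfolding U_def using finI finA by auto
  define r where "r i z = (if z \<in> A i then 1 else 0 :: real)" for i z
  define c where "c z = (\<Sum>i\<in>I. r i z)" for z
  have cardAA: "real (card (A i \<inter> A j)) = (\<Sum>z\<in>U. r i z * r j z)" if "i \<in> I" for i j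
  proof -
    have "(\<Sum>z\<in>U. r i z * r j z) = (\<Sum>z\<in>U. if z \<in> A i \<inter> A j then 1 else 0)"
      unfolding r_def by (rule sum.cong) auto
    also have "\<dots> = real (card (U \<inter> {z. z \<in> A i \<inter> A j}))"
      by (simp add: sum.If_cases[OF finU])
    also have "U \<inter> {z. z \<in> A i \<inter> A j} = A i \<inter> A j" using that unfolding U_def by auto
    finally show ?thesis by simp
  qed
  have cardA: "real (card (A i)) = (\<Sum>z\<in>U. r i z)" if "i \<in> I" for i
    using cardAA[OF that, of i] unfolding r_def by (simp add: if_distrib cong: if_cong)
  have S1: "(\<Sum>i\<in>I. real (card (A i))) = (\<Sum>z\<in>U. c z)"
    unfolding c_def by (simp add: cardA sum.swap[of _ I U])
  have inner: "(\<Sum>j\<in>I-{i}. r j z) = c z - r i z" if "i \<in> I" for i z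
    unfolding c_def using sum.remove[OF finI that, of "\<lambda>j. r j z"] by simp
  have rr: "r i z * r i z = r i z" for i z unfolding r_def by simp
  have S2: "(\<Sum>i\<in>I. \<Sum>j\<in>I-{i}. real (card (A i \<inter> A j))) = (\<Sum>z\<in>U. c z * c z - c z)"
  proof -
    have "(\<Sum>i\<in>I. \<Sum>j\<in>I-{i}. real (card (A i \<inter> A j)))
        = (\<Sum>i\<in>I. \<Sum>j\<in>I-{i}. \<Sum>z\<in>U. r i z * r j z)"
      by (rule sum.cong) (auto simp: cardAA)
    also have "\<dots> = (\<Sum>i\<in>I. \<Sum>z\<in>U. \<Sum>j\<in>I-{i}. r i z * r j z)"
      by (rule sum.cong[OF refl], rule sum.swap)
    also have "\<dots> = (\<Sum>z\<in>U. \<Sum>i\<in>I. r i z * (\<Sum>j\<in>I-{i}. r j z))"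
      by (subst sum.swap) (simp add: sum_distrib_left)
    also have "\<dots> = (\<Sum>z\<in>U. \<Sum>i\<in>I. r i z * c z - r i z)"
      by (rule sum.cong[OF refl], rule sum.cong[OF refl]) (simp add: inner right_diff_distrib rr)
    also have "\<dots> = (\<Sum>z\<in>U. c z * c z - c z)"
      by (rule sum.cong[OF refl]) (simp add: sum_subtractf c_def sum_distrib_right)
    finally show ?thesis .
  qed
  have cnat: "\<exists>m::nat. c z = real m" for z
    unfolding c_def r_def by (simp add: sum.If_cases[OF finI]) 
  have pt: "1 \<ge> c z - (c z * c z - c z) / 2" if "z \<in> U" for z
  proof -
    obtain m :: nat where m: "c z = real m" using cnat by blast
    have "(real m - 1) * (real m - 2) \<ge> 0"
    proof (cases "m \<le> 1")
      case True then have "m = 0 \<or> m = 1" by auto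
      then show ?thesis by auto
    next
      case False then have "real m \<ge> 2" by simp
      then show ?thesis by (simp add: mult_nonneg_nonneg)
    qed
    then show ?thesis unfolding m by (simp add: algebra_simps field_simps)
  qed
  have "(\<Sum>z\<in>U. c z - (c z * c z - c z) / 2) \<le> (\<Sum>z\<in>U. 1)"
    by (rule sum_mono) (use pt in auto)
  then show ?thesis unfolding U_def[symmetric] S1 S2
    by (simp add: sum_subtractf sum_divide_distrib[symmetric])
qed




definition ff :: "nat \<Rightarrow> nat \<Rightarrow> nat" where "ff n k = (\<Prod>i<k. n - i)"

lemma fact_ff: "k \<le> n \<Longrightarrow> fact (n - k) * ff n k = (fact n :: nat)"
proof (induction k)
  case 0 then show ?case by (simp add: ff_def)
next
  case (Suc k)
  have e: "n - k = Suc (n - Suc k)" using Suc.prems by simp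
  have f: "fact (n - k) = (n - k) * (fact (n - Suc k) :: nat)"
    unfolding e fact_Suc by simp
  have g: "ff n (Suc k) = ff n k * (n - k)" unfolding ff_def by simp
  have "fact (n - Suc k) * ff n (Suc k) = fact (n - k) * (ff n k :: nat)"
    unfolding f g by (simp only: mult_ac)
  then show ?case using Suc by simp
qed

definition Fx :: "(nat \<Rightarrow> nat) set \<Rightarrow> nat set \<Rightarrow> (nat \<Rightarrow> nat) set" where
  "Fx C K = {p\<in>C. \<forall>k\<in>K. p k = k}"
definition St :: "(nat \<Rightarrow> nat) set \<Rightarrow> nat set \<Rightarrow> (nat \<Rightarrow> nat) set" where
  "St C S = {p\<in>C. p ` S = S}"

lemma permutes_fix_iff:
  assumes "K \<subseteq> N"
  shows "(p permutes N \<and> (\<forall>k\<in>K. p k = k)) \<longleftrightarrow> p permutes (N - K)"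
proof
  assume a: "p permutes N \<and> (\<forall>k\<in>K. p k = k)"
  then show "p permutes (N - K)" unfolding permutes_def by auto
next
  assume a: "p permutes (N - K)"
  then show "p permutes N \<and> (\<forall>k\<in>K. p k = k)"
    using permutes_subset[OF a] permutes_not_in[OF a] by auto
qed

lemma card_even_perms:
  assumes fin: "finite A" and u: "u \<in> A" "v \<in> A" "u \<noteq> v"
  shows "2 * card {p. p permutes A \<and> evenperm p} = fact (card A)"
proof -
  have "card {p. p permutes A} = 2 * card {p\<in>{p. p permutes A}. evenperm p}"
  proof (rule halving[where \<tau>="transpose u v"])
    show "finite {p. p permutes A}" using finite_permutations[OF fin] .
    show "transpose u v \<circ> transpose u v = id" by simp
    show "transpose u v \<circ> p \<in> {p. p permutes A}" if "p \<in> {p. p permutes A}" for p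
      using permutes_compose[OF that[simplified] permutes_swap_id[OF u(1,2)]] by simp
    show "evenperm (transpose u v \<circ> p) = (\<not> evenperm p)" if "p \<in> {p. p permutes A}" for p
    proof -
      have pp: "permutation p" using permutes_imp_permutation[OF fin] that by simp
      show ?thesis using evenperm_comp[OF permutation_swap_id pp, of u v] evenperm_swap[of u v] u(3) by simp
    qed
  qed
  then show ?thesis using card_permutations[OF refl fin] by simp
qed

lemma Fx_sym:
  assumes "K \<subseteq> {1..n}"
  shows "Fx (carrier (sym_group n)) K = {p. p permutes ({1..n} - K)}"
  unfolding Fx_def sym_group_carrier using permutes_fix_iff[OF assms] by blast

lemma Fx_alt:
  assumes "K \<subseteq> {1..n}"
  shows "Fx (carrier (alt_group n)) K = {p. p permutes ({1..n} - K) \<and> evenperm p}"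
  unfolding Fx_def alt_group_carrier using permutes_fix_iff[OF assms] by blast

lemma two_elems:
  assumes "finite A" "card A \<ge> 2"
  shows "\<exists>u v. u \<in> A \<and> v \<in> A \<and> u \<noteq> v"
proof -
  obtain u where u: "u \<in> A" using assms by fastforce
  have "card (A - {u}) \<ge> 1" using assms u by simp
  then have "A - {u} \<noteq> {}" by (metis card.empty not_one_le_zero)
  then obtain v where "v \<in> A - {u}" by blast
  then show ?thesis using u by blast
qed

lemma avoid2:
  assumes "finite Z" "card Z + 2 \<le> n"
  shows "\<exists>u v. u \<in> {1..n} \<and> v \<in> {1..n} \<and> u \<noteq> v \<and> u \<notin> Z \<and> v \<notin> Z"
proof -
  have "card {1..n} - card Z \<le> card ({1..n} - Z)" using diff_card_le_card_Diff[OF assms(1)] .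
  then have "card ({1..n} - Z) \<ge> 2" using assms by simp
  then show ?thesis using two_elems[of "{1..n} - Z"] by blast
qed

lemma card_Fx_sym:
  assumes "K \<subseteq> {1..n}"
  shows "card (Fx (carrier (sym_group n)) K) * ff n (card K) = card (carrier (sym_group n))"
proof -
  have fK: "finite K" using assms finite_subset by blast
  have ck: "card ({1..n} - K) = n - card K" using card_Diff_subset[OF fK assms] by simp
  have "card K \<le> n" using card_mono[OF _ assms] by simp
  then show ?thesis unfolding Fx_sym[OF assms] sym_group_card_carrier
    using card_permutations[OF ck] fact_ff by simp
qed

lemma card_Fx_alt:
  assumes "K \<subseteq> {1..n}" and "card K + 2 \<le> n"
  shows "card (Fx (carrier (alt_group n)) K) * ff n (card K) = card (carrier (alt_group n))"
proof -
  have fK: "finite K" using assms finite_subset by blast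
  have ck: "card ({1..n} - K) = n - card K" using card_Diff_subset[OF fK assms(1)] by simp
  obtain u v where uv: "u \<in> {1..n} - K" "v \<in> {1..n} - K" "u \<noteq> v"
    using avoid2[OF fK assms(2)] by blast
  have "2 * card (Fx (carrier (alt_group n)) K) = fact (n - card K)"
    unfolding Fx_alt[OF assms(1)] using card_even_perms[OF _ uv] ck by simp
  moreover have "2 * card (carrier (alt_group n)) = fact n" using alt_group_card_carrier assms by simp
  moreover have "card K \<le> n" using assms by simp
  ultimately have "2 * (card (Fx (carrier (alt_group n)) K) * ff n (card K)) = 2 * card (carrier (alt_group n))"
    using fact_ff[of "card K" n] by (simp only: mult.assoc[symmetric])
  then show ?thesis by simp
qed




locale pg =
  fixes n :: nat and X :: "(nat \<Rightarrow> nat) monoid"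
  assumes n14: "n \<ge> 14"
    and grp: "group X"
    and carr: "\<And>p. p \<in> carrier X \<Longrightarrow> p permutes {1..n}"
    and mlt: "mult X = (\<circ>)"
    and one: "one X = id"
    and ev: "\<And>q u v. q permutes {1..n} \<Longrightarrow> u \<in> {1..n} \<Longrightarrow> v \<in> {1..n} \<Longrightarrow> u \<noteq> v \<Longrightarrow>
              q \<in> carrier X \<or> q \<circ> transpose u v \<in> carrier X"
    and dt: "\<And>a b u v. a \<in> {1..n} \<Longrightarrow> b \<in> {1..n} \<Longrightarrow> u \<in> {1..n} \<Longrightarrow> v \<in> {1..n} \<Longrightarrow>
              a \<noteq> b \<Longrightarrow> u \<noteq> v \<Longrightarrow> a \<noteq> u \<Longrightarrow> a \<noteq> v \<Longrightarrow> b \<noteq> u \<Longrightarrow> b \<noteq> v \<Longrightarrow>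
              transpose a b \<circ> transpose u v \<in> carrier X"
    and fxc: "\<And>K. K \<subseteq> {1..n} \<Longrightarrow> card K \<le> 4 \<Longrightarrow>
              card (Fx (carrier X) K) * ff n (card K) = card (carrier X)"
begin

abbreviation "C \<equiv> carrier X"
abbreviation "N \<equiv> {1..n}"

lemma finC: "finite C"
proof -
  have "C \<subseteq> {p. p permutes N}" using carr by blast
  then show ?thesis using finite_permutations[of N] finite_subset by blast
qed

lemma comp_C: "p \<in> C \<Longrightarrow> q \<in> C \<Longrightarrow> p \<circ> q \<in> C"
  using monoid.m_closed[OF group.is_monoid[OF grp], of p q] mlt by simp

lemma id_C: "id \<in> C"
  using group.is_monoid[OF grp] monoid.one_closed one by metis

lemma invC: assumes "p \<in> C"
  shows "inv\<^bsub>X\<^esub> p \<in> C" "inv\<^bsub>X\<^esub> p \<circ> p = id" "p \<circ> inv\<^bsub>X\<^esub> p = id"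
  using group.inv_closed[OF grp assms] group.l_inv[OF grp assms] group.r_inv[OF grp assms] mlt one
  by auto

lemma inj_C: "p \<in> C \<Longrightarrow> inj p" using carr permutes_inj by blast

lemma sub_comp: "subgroup H X \<Longrightarrow> p \<in> H \<Longrightarrow> q \<in> H \<Longrightarrow> p \<circ> q \<in> H"
  using subgroup.m_closed[of H X p q] mlt by simp

lemma sub_inv: "subgroup H X \<Longrightarrow> p \<in> H \<Longrightarrow> inv\<^bsub>X\<^esub> p \<in> H"
  by (simp add: subgroup.m_inv_closed)

lemma sub_C: "subgroup H X \<Longrightarrow> H \<subseteq> C" by (simp add: subgroup.subset)

lemma sub_id: "subgroup H X \<Longrightarrow> id \<in> H" using subgroup.one_closed one by metis

lemma evq: assumes "q0 permutes N" "u \<in> N" "v \<in> N" "u \<noteq> v"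
  shows "\<exists>q\<in>C. \<forall>x. x \<noteq> u \<and> x \<noteq> v \<longrightarrow> q x = q0 x"
proof -
  from ev[OF assms] show ?thesis
  proof
    assume "q0 \<in> C" then show ?thesis by blast
  next
    assume a: "q0 \<circ> transpose u v \<in> C"
    show ?thesis by (rule bexI[OF _ a]) simp
  qed
qed

lemma sub_Fx: "subgroup (Fx C K) X"
proof (rule group.subgroupI[OF grp])
  show "Fx C K \<subseteq> C" unfolding Fx_def by auto
  show "Fx C K \<noteq> {}" using id_C unfolding Fx_def by auto
  fix a assume a: "a \<in> Fx C K"
  then have aC: "a \<in> C" unfolding Fx_def by auto
  have "(inv\<^bsub>X\<^esub> a) k = k" if "k \<in> K" for k
  proof -
    have "(inv\<^bsub>X\<^esub> a) (a k) = k" using invC(2)[OF aC] by (metis comp_apply id_apply)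
    then show ?thesis using a that unfolding Fx_def by auto
  qed
  then show "inv\<^bsub>X\<^esub> a \<in> Fx C K" using invC(1)[OF aC] unfolding Fx_def by auto
next
  fix a b assume "a \<in> Fx C K" "b \<in> Fx C K"
  then show "a \<otimes>\<^bsub>X\<^esub> b \<in> Fx C K" using comp_C mlt unfolding Fx_def by auto
qed

lemma sub_St: "subgroup (St C S) X"
proof (rule group.subgroupI[OF grp])
  show "St C S \<subseteq> C" unfolding St_def by auto
  show "St C S \<noteq> {}" using id_C unfolding St_def by auto
  fix a assume a: "a \<in> St C S"
  then have aC: "a \<in> C" and aS: "a ` S = S" unfolding St_def by auto
  have "(inv\<^bsub>X\<^esub> a) ` S = (inv\<^bsub>X\<^esub> a) ` (a ` S)" using aS by simp
  also have "\<dots> = (inv\<^bsub>X\<^esub> a \<circ> a) ` S" by (rule image_comp)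
  also have "\<dots> = S" using invC(2)[OF aC] by simp
  finally show "inv\<^bsub>X\<^esub> a \<in> St C S" using invC(1)[OF aC] unfolding St_def by auto
next
  fix a b assume a: "a \<in> St C S" and b: "b \<in> St C S"
  then have "a ` (b ` S) = S" unfolding St_def by simp
  then have "(a \<circ> b) ` S = S" by (simp only: image_comp)
  then show "a \<otimes>\<^bsub>X\<^esub> b \<in> St C S" using comp_C mlt a b unfolding St_def by simp
qed

definition tau :: "nat \<Rightarrow> nat \<Rightarrow> nat \<Rightarrow> nat \<Rightarrow> nat \<Rightarrow> nat" where
  "tau a b u v = transpose a b \<circ> transpose u v"

lemma tau_inv: "a \<noteq> u \<Longrightarrow> a \<noteq> v \<Longrightarrow> b \<noteq> u \<Longrightarrow> b \<noteq> v \<Longrightarrow> tau a b u v \<circ> tau a b u v = id"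
  unfolding tau_def by (rule ext) (simp add: transpose_def)

lemma tau_other: "x \<notin> {a,b,u,v} \<Longrightarrow> tau a b u v x = x"
  unfolding tau_def by (simp add: transpose_def)

lemma tau_a: "a \<noteq> u \<Longrightarrow> a \<noteq> v \<Longrightarrow> b \<noteq> u \<Longrightarrow> b \<noteq> v \<Longrightarrow> tau a b u v a = b"
  unfolding tau_def by (simp add: transpose_def)
lemma tau_b: "a \<noteq> u \<Longrightarrow> a \<noteq> v \<Longrightarrow> b \<noteq> u \<Longrightarrow> b \<noteq> v \<Longrightarrow> tau a b u v b = a"
  unfolding tau_def by (simp add: transpose_def)

lemma half_St:
  assumes ab: "a \<in> N" "b \<in> N" "a \<noteq> b" and uv: "u \<in> N" "v \<in> N" "u \<noteq> v"
    and d: "a \<noteq> u" "a \<noteq> v" "b \<noteq> u" "b \<noteq> v"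
    and HS: "H \<subseteq> St C {a,b}" and cl: "\<And>p. p \<in> H \<Longrightarrow> tau a b u v \<circ> p \<in> H"
  shows "card H = 2 * card (H \<inter> Fx C {a,b})"
proof -
  have HC: "H \<subseteq> C" using HS unfolding St_def by blast
  have finH: "finite H" using finite_subset[OF HC finC] .
  have pa: "p a = a \<or> p a = b" if "p \<in> H" for p
  proof -
    have "p ` {a,b} = {a,b}" using HS that unfolding St_def by blast
    moreover have "p a \<in> p ` {a,b}" by blast
    ultimately show ?thesis by blast
  qed
  have eq: "{p\<in>H. p a = a} = H \<inter> Fx C {a,b}"
  proof (intro equalityI subsetI)
    fix p assume p: "p \<in> {p\<in>H. p a = a}"
    then have pS: "p ` {a,b} = {a,b}" "p \<in> C" using HS unfolding St_def by blast+
    have "p b \<noteq> p a" using inj_C[OF pS(2)] ab(3) by (metis injD)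
    moreover have "p b \<in> {a,b}" using pS(1) by blast
    ultimately have "p b = b" using p by simp
    then show "p \<in> H \<inter> Fx C {a,b}" using p pS unfolding Fx_def by simp
  next
    fix p assume "p \<in> H \<inter> Fx C {a,b}" then show "p \<in> {p\<in>H. p a = a}" unfolding Fx_def by simp
  qed
  have "card H = 2 * card {p\<in>H. p a = a}"
  proof (rule halving[OF finH tau_inv[OF d] cl])
    fix p assume "p \<in> H"
    then show "(tau a b u v \<circ> p) a = a \<longleftrightarrow> \<not> p a = a"
      using pa[OF \<open>p \<in> H\<close>] tau_a[OF d] tau_b[OF d] ab(3) by (metis comp_apply)
  qed
  then show ?thesis using eq by simp
qed

lemma tau_C: "a \<in> N \<Longrightarrow> b \<in> N \<Longrightarrow> u \<in> N \<Longrightarrow> v \<in> N \<Longrightarrow> a \<noteq> b \<Longrightarrow> u \<noteq> v \<Longrightarrow>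
   a \<noteq> u \<Longrightarrow> a \<noteq> v \<Longrightarrow> b \<noteq> u \<Longrightarrow> b \<noteq> v \<Longrightarrow> tau a b u v \<in> C"
  unfolding tau_def by (rule dt)

lemma Fx_cl: "p \<in> Fx C K \<Longrightarrow> t \<in> C \<Longrightarrow> (\<And>k. k \<in> K \<Longrightarrow> t k = k) \<Longrightarrow> t \<circ> p \<in> Fx C K"
  unfolding Fx_def using comp_C by auto

lemma St_cl: "p \<in> St C S \<Longrightarrow> t \<in> C \<Longrightarrow> t ` S = S \<Longrightarrow> t \<circ> p \<in> St C S"
  unfolding St_def using comp_C by (metis (mono_tags, lifting) image_comp mem_Collect_eq)

lemma Fx_sub_St: "Fx C K \<subseteq> St C K"
  unfolding Fx_def St_def by force

end



lemma real_choose2: "real (m choose 2) = real m * (real m - 1) / 2"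
proof (cases m)
  case 0 then show ?thesis by simp
next
  case (Suc k)
  have ev: "even (m * (m - 1))" using Suc by simp
  have "2 * (m choose 2) = m * (m - 1)" unfolding choose_two using ev by simp
  then have "2 * real (m choose 2) = real m * real (m - 1)" by (metis of_nat_mult of_nat_numeral)
  then show ?thesis using Suc by (simp add: of_nat_diff)
qed

lemma ff_vals: "ff n 1 = n" "ff n 2 = n*(n-1)" "ff n 3 = n*(n-1)*(n-2)" "ff n 4 = n*(n-1)*(n-2)*(n-3)"
  by (simp_all add: ff_def numeral_eq_Suc lessThan_Suc)

context pg begin

definition "g = real (card C)"
definition "x = real n"
definition "f1 = g / x"
definition "f2 = g / (x * (x - 1))"
definition "f3 = g / (x * (x - 1) * (x - 2))"
definition "f4 = g / (x * (x - 1) * (x - 2) * (x - 3))"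

lemma x14: "x \<ge> 14" unfolding x_def using n14 by simp

lemma cFx: assumes "K \<subseteq> N" "card K \<le> 4" shows "real (card (Fx C K)) = g / real (ff n (card K))"
proof -
  have "ff n (card K) > 0" unfolding ff_def using n14 assms(2) by (auto intro!: prod_pos)
  then show ?thesis using fxc[OF assms] unfolding g_def
    by (metis nonzero_eq_divide_eq of_nat_0_less_iff of_nat_mult less_irrefl)
qed

lemma cF1: assumes "i \<in> N" shows "real (card (Fx C {i})) = f1"
proof -
  have "real (card (Fx C {i})) = g / real (ff n 1)" using cFx[of "{i}"] assms by simp
  then show ?thesis unfolding f1_def x_def ff_vals .
qed

lemma cF2: assumes "a \<in> N" "b \<in> N" "a \<noteq> b" shows "real (card (Fx C {a,b})) = f2"
proof -
  have c: "card {a,b} = 2" using assms by simp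
  have "real (card (Fx C {a,b})) = g / real (ff n (card {a,b}))" by (rule cFx) (use assms c in auto)
  then have "real (card (Fx C {a,b})) = g / real (ff n 2)" unfolding c .
  then show ?thesis unfolding f2_def x_def ff_vals using n14 by (simp add: of_nat_diff)
qed

lemma cF3: assumes "a \<in> N" "b \<in> N" "c \<in> N" "distinct [a,b,c]" shows "real (card (Fx C {a,b,c})) = f3"
proof -
  have c: "card {a,b,c} = 3" using assms by simp
  have "real (card (Fx C {a,b,c})) = g / real (ff n (card {a,b,c}))" by (rule cFx) (use assms c in auto)
  then have "real (card (Fx C {a,b,c})) = g / real (ff n 3)" unfolding c .
  then show ?thesis unfolding f3_def x_def ff_vals using n14 by (simp add: of_nat_diff)
qed

lemma cF4: assumes "a \<in> N" "b \<in> N" "c \<in> N" "d \<in> N" "distinct [a,b,c,d]" shows "real (card (Fx C {a,b,c,d})) = f4"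
proof -
  have c: "card {a,b,c,d} = 4" using assms by simp
  have "real (card (Fx C {a,b,c,d})) = g / real (ff n (card {a,b,c,d}))" by (rule cFx) (use assms c in auto)
  then have "real (card (Fx C {a,b,c,d})) = g / real (ff n 4)" unfolding c .
  then show ?thesis unfolding f4_def x_def ff_vals using n14 by (simp add: of_nat_diff)
qed

lemma Fx_Int: "Fx C K \<inter> Fx C L = Fx C (K \<union> L)" unfolding Fx_def by auto

lemma free2: assumes "finite Z" "card Z \<le> 4"
  obtains u v where "u \<in> N" "v \<in> N" "u \<noteq> v" "u \<notin> Z" "v \<notin> Z"
proof -
  have "card Z + 2 \<le> n" using assms(2) n14 by linarith
  then show ?thesis using avoid2[OF assms(1)] that by blast
qed

lemma tau_pair: "a \<noteq> u \<Longrightarrow> a \<noteq> v \<Longrightarrow> b \<noteq> u \<Longrightarrow> b \<noteq> v \<Longrightarrow> tau a b u v ` {a,b} = {a,b}"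
  using tau_a tau_b by auto

lemma tau_fixset: "T \<inter> {a,b,u,v} = {} \<Longrightarrow> tau a b u v ` T = T"
proof -
  assume "T \<inter> {a,b,u,v} = {}"
  then have "\<forall>y\<in>T. tau a b u v y = y" using tau_other by blast
  then have "tau a b u v ` T = id ` T" by (simp add: image_cong)
  then show ?thesis by simp
qed

end



context pg begin

lemma card4: "card {a,b,c,d::nat} \<le> 4"
  by (auto simp: card_insert_if)

lemma free4: obtains u v where "u \<in> N" "v \<in> N" "u \<noteq> v" "u \<noteq> a" "u \<noteq> b" "u \<noteq> c" "u \<noteq> d"
   "v \<noteq> a" "v \<noteq> b" "v \<noteq> c" "v \<noteq> d"
  using free2[of "{a,b,c,d}", OF _ card4] by blast

lemma cSt: assumes "a \<in> N" "b \<in> N" "a \<noteq> b" shows "real (card (St C {a,b})) = 2 * f2"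
proof -
  obtain u v where uv: "u \<in> N" "v \<in> N" "u \<noteq> v" "u \<notin> {a,b}" "v \<notin> {a,b}"
    using free4[of a b a a] by blast
  have "card (St C {a,b}) = 2 * card (St C {a,b} \<inter> Fx C {a,b})"
  proof (rule half_St[of a b u v])
    fix p assume "p \<in> St C {a,b}"
    then show "tau a b u v \<circ> p \<in> St C {a,b}"
      using St_cl tau_C tau_pair assms uv by auto
  qed (use assms uv in auto)
  moreover have "St C {a,b} \<inter> Fx C {a,b} = Fx C {a,b}" using Fx_sub_St by blast
  ultimately show ?thesis using cF2[OF assms] by simp
qed

lemma cFxSt: assumes "i \<in> N" "a \<in> N" "b \<in> N" "distinct [i,a,b]"
  shows "real (card (Fx C {i} \<inter> St C {a,b})) = 2 * f3"
proof -
  obtain u v where uv: "u \<in> N" "v \<in> N" "u \<noteq> v" "u \<notin> {a,b,i}" "v \<notin> {a,b,i}"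
    using free4[of a b i i] by blast
  have "card (Fx C {i} \<inter> St C {a,b}) = 2 * card (Fx C {i} \<inter> St C {a,b} \<inter> Fx C {a,b})"
  proof (rule half_St[of a b u v])
    fix p assume p: "p \<in> Fx C {i} \<inter> St C {a,b}"
    have tC: "tau a b u v \<in> C" using tau_C assms uv by auto
    have "tau a b u v \<circ> p \<in> Fx C {i}" using Fx_cl[OF _ tC, of p "{i}"] p tau_other[of i a b u v] assms uv by auto
    moreover have "tau a b u v \<circ> p \<in> St C {a,b}" using St_cl[OF _ tC] p tau_pair assms uv by auto
    ultimately show "tau a b u v \<circ> p \<in> Fx C {i} \<inter> St C {a,b}" by blast
  qed (use assms uv in auto)
  moreover have "Fx C {i} \<inter> St C {a,b} \<inter> Fx C {a,b} = Fx C {i} \<inter> Fx C {a,b}"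
    using Fx_sub_St[of "{a,b}"] by blast
  moreover have "Fx C {i} \<inter> Fx C {a,b} = Fx C {i,a,b}" unfolding Fx_def by auto
  ultimately show ?thesis using cF3[OF assms] by simp
qed

lemma cFxSt2: assumes "a \<in> N" "b \<in> N" "c \<in> N" "d \<in> N" "distinct [a,b,c,d]"
  shows "real (card (Fx C {a,b} \<inter> St C {c,d})) = 2 * f4"
proof -
  obtain u v where uv: "u \<in> N" "v \<in> N" "u \<noteq> v" "u \<notin> {a,b,c,d}" "v \<notin> {a,b,c,d}"
    using free4[of a b c d] by blast
  have "card (Fx C {a,b} \<inter> St C {c,d}) = 2 * card (Fx C {a,b} \<inter> St C {c,d} \<inter> Fx C {c,d})"
  proof (rule half_St[of c d u v])
    fix p assume p: "p \<in> Fx C {a,b} \<inter> St C {c,d}"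
    have tC: "tau c d u v \<in> C" using tau_C assms uv by auto
    have "tau c d u v \<circ> p \<in> Fx C {a,b}" using Fx_cl[OF _ tC, of p "{a,b}"] p tau_other[of _ c d u v] assms uv by auto
    moreover have "tau c d u v \<circ> p \<in> St C {c,d}" using St_cl[OF _ tC] p tau_pair assms uv by auto
    ultimately show "tau c d u v \<circ> p \<in> Fx C {a,b} \<inter> St C {c,d}" by blast
  qed (use assms uv in auto)
  moreover have "Fx C {a,b} \<inter> St C {c,d} \<inter> Fx C {c,d} = Fx C {a,b} \<inter> Fx C {c,d}"
    using Fx_sub_St[of "{c,d}"] by blast
  moreover have "Fx C {a,b} \<inter> Fx C {c,d} = Fx C {a,b,c,d}" unfolding Fx_def by auto
  ultimately show ?thesis using cF4[OF assms] by simp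
qed

lemma cStSt: assumes "a \<in> N" "b \<in> N" "c \<in> N" "d \<in> N" "distinct [a,b,c,d]"
  shows "real (card (St C {a,b} \<inter> St C {c,d})) = 4 * f4"
proof -
  obtain u v where uv: "u \<in> N" "v \<in> N" "u \<noteq> v" "u \<notin> {a,b,c,d}" "v \<notin> {a,b,c,d}"
    using free4[of a b c d] by blast
  have "card (St C {a,b} \<inter> St C {c,d}) = 2 * card (St C {a,b} \<inter> St C {c,d} \<inter> Fx C {a,b})"
  proof (rule half_St[of a b u v])
    fix p assume p: "p \<in> St C {a,b} \<inter> St C {c,d}"
    have tC: "tau a b u v \<in> C" using tau_C assms uv by auto
    have "tau a b u v ` {c,d} = {c,d}" by (rule tau_fixset) (use assms uv in auto)
    then have "tau a b u v \<circ> p \<in> St C {c,d}" using St_cl[OF _ tC] p by auto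
    moreover have "tau a b u v \<circ> p \<in> St C {a,b}" using St_cl[OF _ tC] p tau_pair assms uv by auto
    ultimately show "tau a b u v \<circ> p \<in> St C {a,b} \<inter> St C {c,d}" by blast
  qed (use assms uv in auto)
  moreover have "St C {a,b} \<inter> St C {c,d} \<inter> Fx C {a,b} = Fx C {a,b} \<inter> St C {c,d}"
    using Fx_sub_St[of "{a,b}"] by auto
  ultimately show ?thesis using cFxSt2[OF assms] by simp
qed

end



lemma sq_card: "real (card (A \<times> A)) = real (card A) ^ 2"
  by (simp add: card_cartesian_product power2_eq_square)

lemma sqdiff_card: assumes "finite A" "B \<subseteq> A"
  shows "real (card (A \<times> A - B \<times> B)) = real (card A) ^ 2 - real (card B) ^ 2"
proof -
  have "B \<times> B \<subseteq> A \<times> A" using assms by auto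
  moreover have "finite (B \<times> B)" using assms finite_subset by blast
  ultimately have "card (A \<times> A - B \<times> B) = card (A \<times> A) - card (B \<times> B)" by (simp add: card_Diff_subset)
  moreover have "card (B \<times> B) \<le> card (A \<times> A)"
    using card_mono[of "A \<times> A" "B \<times> B"] assms \<open>B \<times> B \<subseteq> A \<times> A\<close> by simp
  ultimately show ?thesis by (simp add: of_nat_diff sq_card)
qed

lemma two_set: "card S = 2 \<Longrightarrow> \<exists>a b. S = {a,b} \<and> a \<noteq> b"
  by (simp add: card_2_iff)

context pg begin

definition "P2 = {S. S \<subseteq> N \<and> card S = 2}"

definition E :: "nat + nat set \<Rightarrow> ((nat \<Rightarrow> nat) \<times> (nat \<Rightarrow> nat)) set" where
  "E j = (case j of Inl i \<Rightarrow> Fx C {i} \<times> Fx C {i} | Inr S \<Rightarrow> St C S \<times> St C S - Fx C S \<times> Fx C S)"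

definition "I = Inl ` N \<union> Inr ` P2"

lemma finFx: "finite (Fx C K)" using finC unfolding Fx_def by simp
lemma finSt: "finite (St C K)" using finC unfolding St_def by simp

lemma P2E: assumes "S \<in> P2" obtains a b where "S = {a,b}" "a \<noteq> b" "a \<in> N" "b \<in> N"
proof -
  have "card S = 2" "S \<subseteq> N" using assms unfolding P2_def by auto
  then obtain a b where "S = {a,b}" "a \<noteq> b" using two_set by blast
  then show ?thesis using that \<open>S \<subseteq> N\<close> by blast
qed

lemma cE1: "i \<in> N \<Longrightarrow> real (card (E (Inl i))) = f1 ^ 2"
  unfolding E_def using cF1 by (simp add: sq_card)

lemma cE2: assumes "S \<in> P2" shows "real (card (E (Inr S))) = 3 * f2 ^ 2"
proof -
  obtain a b where ab: "S = {a,b}" "a \<noteq> b" "a \<in> N" "b \<in> N" using P2E[OF assms] .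
  have "real (card (E (Inr S))) = real (card (St C S)) ^ 2 - real (card (Fx C S)) ^ 2"
    unfolding E_def using sqdiff_card[OF finSt Fx_sub_St] by simp
  then show ?thesis using cSt[of a b] cF2[of a b] ab by (simp add: power2_eq_square)
qed

lemma Int11: assumes "i \<in> N" "j \<in> N" "i \<noteq> j"
  shows "real (card (E (Inl i) \<inter> E (Inl j))) = f2 ^ 2"
proof -
  have "E (Inl i) \<inter> E (Inl j) = Fx C {i,j} \<times> Fx C {i,j}" unfolding E_def Fx_def by auto
  then show ?thesis using cF2[OF assms] by (simp add: sq_card)
qed

lemma StFx_pt: assumes "p \<in> St C {a,b}" "p a = a" "a \<noteq> b" shows "p \<in> Fx C {a,b}"
proof -
  have pS: "p ` {a,b} = {a,b}" "p \<in> C" using assms unfolding St_def by blast+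
  have "p b \<noteq> p a" using inj_C[OF pS(2)] assms(3) by (metis injD)
  moreover have "p b \<in> {a,b}" using pS(1) by blast
  ultimately have "p b = b" using assms by simp
  then show ?thesis using pS assms unfolding Fx_def by simp
qed

lemma Int12a: assumes "S \<in> P2" "i \<in> S" shows "E (Inl i) \<inter> E (Inr S) = {}"
proof -
  obtain a b where ab: "S = {a,b}" "a \<noteq> b" "a \<in> N" "b \<in> N" using P2E[OF assms(1)] .
  have "p \<in> Fx C S" if "p \<in> Fx C {i}" "p \<in> St C S" for p
  proof (cases "i = a")
    case True then show ?thesis using StFx_pt[of p a b] that ab unfolding Fx_def by auto
  next
    case False then have "i = b" using assms ab by auto
    then show ?thesis using StFx_pt[of p b a] that ab unfolding Fx_def by (auto simp: insert_commute)
  qed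
  then show ?thesis unfolding E_def by auto
qed

lemma Int12b: assumes "S \<in> P2" "i \<in> N" "i \<notin> S"
  shows "real (card (E (Inl i) \<inter> E (Inr S))) = 3 * f3 ^ 2"
proof -
  obtain a b where ab: "S = {a,b}" "a \<noteq> b" "a \<in> N" "b \<in> N" using P2E[OF assms(1)] .
  have fx3: "Fx C {i} \<inter> Fx C S = Fx C {i,a,b}" unfolding ab Fx_def by auto
  have "E (Inl i) \<inter> E (Inr S) = (Fx C {i} \<inter> St C S) \<times> (Fx C {i} \<inter> St C S) - (Fx C {i} \<inter> Fx C S) \<times> (Fx C {i} \<inter> Fx C S)"
    unfolding E_def by auto
  then have "E (Inl i) \<inter> E (Inr S) = (Fx C {i} \<inter> St C S) \<times> (Fx C {i} \<inter> St C S) - (Fx C {i,a,b}) \<times> (Fx C {i,a,b})"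
    unfolding fx3 .
  moreover have "Fx C {i,a,b} \<subseteq> Fx C {i} \<inter> St C S" using Fx_sub_St[of S] unfolding fx3[symmetric] by blast
  ultimately have "real (card (E (Inl i) \<inter> E (Inr S))) = real (card (Fx C {i} \<inter> St C S))^2 - real (card (Fx C {i,a,b}))^2"
    using sqdiff_card[of "Fx C {i} \<inter> St C S" "Fx C {i,a,b}"] finSt by simp
  then show ?thesis using cFxSt[of i a b] cF3[of i a b] ab assms by (simp add: power2_eq_square)
qed

lemma Int22a: assumes "S \<in> P2" "T \<in> P2" "S \<noteq> T" "S \<inter> T \<noteq> {}" shows "E (Inr S) \<inter> E (Inr T) = {}"
proof -
  obtain a b where ab: "S = {a,b}" "a \<noteq> b" "a \<in> N" "b \<in> N" using P2E[OF assms(1)] .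
  obtain c d where cd: "T = {c,d}" "c \<noteq> d" "c \<in> N" "d \<in> N" using P2E[OF assms(2)] .
  obtain z where z: "z \<in> S" "z \<in> T" using assms(4) by blast
  have "\<exists>w. S = {z,w} \<and> z \<noteq> w" using z(1) ab by (auto simp: insert_commute)
  then obtain w where w: "S = {z,w}" "z \<noteq> w" by blast
  have "\<exists>w. T = {z,w} \<and> z \<noteq> w" using z(2) cd by (auto simp: insert_commute)
  then obtain w' where w': "T = {z,w'}" "z \<noteq> w'" by blast
  have zw: "S = {z,w}" "T = {z,w'}" "z \<noteq> w" "z \<noteq> w'" "w \<noteq> w'" using w w' assms(3) by auto
  have "p \<in> Fx C S" if "p \<in> St C S" "p \<in> St C T" for p
  proof -
    have "p z \<in> S" "p z \<in> T" using that zw unfolding St_def by blast+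
    then have "p z = z" using zw by auto
    then show ?thesis using StFx_pt[of p z w] that zw by simp
  qed
  then show ?thesis unfolding E_def by auto
qed

lemma Int22b: assumes "S \<in> P2" "T \<in> P2" "S \<inter> T = {}"
  shows "real (card (E (Inr S) \<inter> E (Inr T))) = 9 * f4 ^ 2"
proof -
  obtain a b where ab: "S = {a,b}" "a \<noteq> b" "a \<in> N" "b \<in> N" using P2E[OF assms(1)] .
  obtain c d where cd: "T = {c,d}" "c \<noteq> d" "c \<in> N" "d \<in> N" using P2E[OF assms(2)] .
  have dis: "distinct [a,b,c,d]" using ab cd assms(3) by auto
  define P where "P = St C S \<inter> St C T"
  define A where "A = Fx C S \<inter> St C T"
  define B where "B = St C S \<inter> Fx C T"
  have AP: "A \<subseteq> P" "B \<subseteq> P" unfolding A_def B_def P_def using Fx_sub_St by blast+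
  have eq: "E (Inr S) \<inter> E (Inr T) = P \<times> P - (A \<times> A \<union> B \<times> B)"
    unfolding E_def P_def A_def B_def using Fx_sub_St[of S] Fx_sub_St[of T] by auto
  have finP: "finite P" unfolding P_def using finSt by blast
  have sub: "A \<times> A \<union> B \<times> B \<subseteq> P \<times> P" using AP by auto
  have finAB: "finite (A \<times> A \<union> B \<times> B)" using finite_subset[OF sub] finP by blast
  have c1: "card (P \<times> P - (A \<times> A \<union> B \<times> B)) = card (P \<times> P) - card (A \<times> A \<union> B \<times> B)"
    using card_Diff_subset[OF finAB sub] .
  have c2: "card (A \<times> A \<union> B \<times> B) \<le> card (P \<times> P)" using card_mono[OF _ sub] finP by simp
  have finA: "finite (A \<times> A)" "finite (B \<times> B)" using finAB by auto
  have c3: "card (A \<times> A \<union> B \<times> B) + card ((A \<inter> B) \<times> (A \<inter> B)) = card (A \<times> A) + card (B \<times> B)"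
    using card_Un_Int[OF finA] by (metis Times_Int_Times)
  have AB0: "A \<inter> B = Fx C S \<inter> Fx C T" unfolding A_def B_def using Fx_sub_St[of S] Fx_sub_St[of T] by blast
  have AB: "A \<inter> B = Fx C {a,b,c,d}" unfolding AB0 ab cd Fx_def by auto
  have rP: "real (card P) = 4 * f4" unfolding P_def ab cd using cStSt[OF ab(3,4) cd(3,4) dis] .
  have rA: "real (card A) = 2 * f4" unfolding A_def ab cd using cFxSt2[OF ab(3,4) cd(3,4) dis] .
  have dis2: "distinct [c,d,a,b]" using dis by auto
  have rB: "real (card B) = 2 * f4" unfolding B_def ab cd using cFxSt2[OF cd(3,4) ab(3,4) dis2] by (simp add: Int_commute)
  have rAB: "real (card (A \<inter> B)) = f4" unfolding AB using cF4[OF ab(3,4) cd(3,4) dis] .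
  have e1: "real (card (E (Inr S) \<inter> E (Inr T))) = real (card (P \<times> P)) - real (card (A \<times> A \<union> B \<times> B))"
    by (simp only: eq c1 of_nat_diff[OF c2])
  have "real (card (A \<times> A \<union> B \<times> B)) + real (card ((A \<inter> B) \<times> (A \<inter> B))) = real (card (A \<times> A)) + real (card (B \<times> B))"
    using c3 by (metis of_nat_add)
  then have e2: "real (card (A \<times> A \<union> B \<times> B)) = real (card (A \<times> A)) + real (card (B \<times> B)) - real (card ((A \<inter> B) \<times> (A \<inter> B)))"
    by linarith
  show ?thesis unfolding e1 e2 sq_card rP rA rB rAB by (simp add: power2_eq_square)
qed

end


context pg begin

lemma finP2: "finite P2" unfolding P2_def by (rule finite_subset[of _ "Pow N"]) auto
lemma finI: "finite I" unfolding I_def using finP2 by simp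
lemma cardP2: "card P2 = n choose 2" unfolding P2_def using n_subsets[of N 2] by simp

lemma cnt1: assumes "i \<in> N" shows "card {S\<in>P2. i \<notin> S} = (n - 1) choose 2"
proof -
  have "{S\<in>P2. i \<notin> S} = {S. S \<subseteq> N - {i} \<and> card S = 2}" unfolding P2_def by auto
  moreover have "card (N - {i}) = n - 1" using assms by simp
  ultimately show ?thesis using n_subsets[of "N - {i}" 2] by simp
qed

lemma cnt2: assumes "S \<in> P2" shows "card {T\<in>P2-{S}. S \<inter> T = {}} = (n - 2) choose 2"
proof -
  obtain a b where ab: "S = {a,b}" "a \<noteq> b" "a \<in> N" "b \<in> N" using P2E[OF assms] .
  have "{T\<in>P2-{S}. S \<inter> T = {}} = {T. T \<subseteq> N - S \<and> card T = 2}" unfolding P2_def using ab by auto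
  moreover have "card (N - S) = n - 2" using ab by (simp add: card_Diff_subset)
  ultimately show ?thesis using n_subsets[of "N - S" 2] by simp
qed

lemma sum_const_filter: "finite A \<Longrightarrow> (\<Sum>a\<in>A. if P a then (c::real) else 0) = real (card {a\<in>A. P a}) * c"
proof -
  assume "finite A"
  then have "(\<Sum>a\<in>A. if P a then (c::real) else 0) = (\<Sum>a\<in>{a\<in>A. P a}. c)" by (rule sum.inter_filter[symmetric])
  then show ?thesis by simp
qed

lemma inner1: assumes i: "i \<in> N"
  shows "(\<Sum>k\<in>I-{Inl i}. real (card (E (Inl i) \<inter> E k))) = (x - 1) * f2^2 + real ((n - 1) choose 2) * (3 * f3^2)"
proof -
  have Isplit: "I - {Inl i} = Inl ` (N - {i}) \<union> Inr ` P2" unfolding I_def by auto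
  have "(\<Sum>k\<in>I-{Inl i}. real (card (E (Inl i) \<inter> E k)))
      = (\<Sum>k\<in>Inl ` (N - {i}). real (card (E (Inl i) \<inter> E k))) + (\<Sum>k\<in>Inr ` P2. real (card (E (Inl i) \<inter> E k)))"
    unfolding Isplit by (rule sum.union_disjoint) (use finP2 in auto)
  also have "(\<Sum>k\<in>Inl ` (N - {i}). real (card (E (Inl i) \<inter> E k))) = (\<Sum>j\<in>N - {i}. real (card (E (Inl i) \<inter> E (Inl j))))"
    by (subst sum.reindex) (auto simp: inj_on_def)
  also have "\<dots> = (\<Sum>j\<in>N - {i}. f2^2)" by (rule sum.cong) (use Int11 i in auto)
  also have "\<dots> = (x - 1) * f2^2" using i unfolding x_def by (simp add: of_nat_diff)
  also have "(\<Sum>k\<in>Inr ` P2. real (card (E (Inl i) \<inter> E k))) = (\<Sum>S\<in>P2. real (card (E (Inl i) \<inter> E (Inr S))))"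
    by (subst sum.reindex) (auto simp: inj_on_def)
  also have "\<dots> = (\<Sum>S\<in>P2. if i \<notin> S then 3 * f3^2 else 0)"
    by (rule sum.cong) (use Int12a Int12b i in auto)
  also have "\<dots> = real ((n - 1) choose 2) * (3 * f3^2)"
    using sum_const_filter[OF finP2] cnt1[OF i] by simp
  finally show ?thesis .
qed

lemma inner2: assumes S: "S \<in> P2"
  shows "(\<Sum>k\<in>I-{Inr S}. real (card (E (Inr S) \<inter> E k))) = (x - 2) * (3 * f3^2) + real ((n - 2) choose 2) * (9 * f4^2)"
proof -
  obtain a b where ab: "S = {a,b}" "a \<noteq> b" "a \<in> N" "b \<in> N" using P2E[OF S] .
  have Isplit: "I - {Inr S} = Inl ` N \<union> Inr ` (P2 - {S})" unfolding I_def by auto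
  have "(\<Sum>k\<in>I-{Inr S}. real (card (E (Inr S) \<inter> E k)))
      = (\<Sum>k\<in>Inl ` N. real (card (E (Inr S) \<inter> E k))) + (\<Sum>k\<in>Inr ` (P2 - {S}). real (card (E (Inr S) \<inter> E k)))"
    unfolding Isplit by (rule sum.union_disjoint) (use finP2 in auto)
  also have "(\<Sum>k\<in>Inl ` N. real (card (E (Inr S) \<inter> E k))) = (\<Sum>j\<in>N. real (card (E (Inr S) \<inter> E (Inl j))))"
    by (subst sum.reindex) (auto simp: inj_on_def)
  also have "\<dots> = (\<Sum>j\<in>N. if j \<notin> S then 3 * f3^2 else 0)"
    by (rule sum.cong) (use Int12a Int12b S in \<open>auto simp: Int_commute\<close>)
  also have "\<dots> = (x - 2) * (3 * f3^2)"
  proof -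
    have "{j\<in>N. j \<notin> S} = N - S" by auto
    moreover have "card (N - S) = n - 2" using ab by (simp add: card_Diff_subset)
    ultimately show ?thesis using sum_const_filter[of N "\<lambda>j. j \<notin> S" "3 * f3^2"] n14 unfolding x_def
      by (simp add: of_nat_diff)
  qed
  also have "(\<Sum>k\<in>Inr ` (P2 - {S}). real (card (E (Inr S) \<inter> E k))) = (\<Sum>T\<in>P2 - {S}. real (card (E (Inr S) \<inter> E (Inr T))))"
    by (subst sum.reindex) (auto simp: inj_on_def)
  also have "\<dots> = (\<Sum>T\<in>P2 - {S}. if S \<inter> T = {} then 9 * f4^2 else 0)"
  proof (rule sum.cong[OF refl])
    fix T assume T: "T \<in> P2 - {S}"
    show "real (card (E (Inr S) \<inter> E (Inr T))) = (if S \<inter> T = {} then 9 * f4^2 else 0)"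
    proof (cases "S \<inter> T = {}")
      case True then show ?thesis using Int22b[OF S _ True] T by simp
    next
      case False
      have "T \<noteq> S" using T by blast
      then have "E (Inr S) \<inter> E (Inr T) = {}" using Int22a[OF S _ _ False] T by blast
      then show ?thesis using False by simp
    qed
  qed
  also have "\<dots> = real ((n - 2) choose 2) * (9 * f4^2)"
    using sum_const_filter[of "P2 - {S}"] finP2 cnt2[OF S] by simp
  finally show ?thesis .
qed

end



lemma poly_pos: fixes x :: real assumes x: "x \<ge> 14" shows "56*x^3 - 736*x^2 - 684*x + 4464 > 0"
proof -
  define t where "t = x - 14"
  have t: "t \<ge> 0" using x t_def by simp
  have "56*x^3 - 736*x^2 - 684*x + 4464 = 56*t^3 + 1616*t^2 + 11636*t + 4296"
    unfolding t_def by (simp add: algebra_simps power2_eq_square power3_eq_cube)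
  also have "\<dots> > 0" using t zero_le_power[OF t, of 3] zero_le_power[OF t, of 2] by linarith
  finally show ?thesis .
qed

lemma core_gen: fixes x a b c :: real assumes "x > 0" "a > 0" "b > 0" "c > 0"
  shows "1/(x*a) - 3/(2*(x*a*b)) - 9/(8*(x*a*b*c)) = (8*b*c - 12*c - 9) / (8*(x*a*b*c))"
  using assms by (simp add: field_simps)

lemma core_ineq: fixes x :: real assumes x: "x \<ge> 14"
  shows "1/(x*(x-1)) - 3/(2*(x*(x-1)*(x-2))) - 9/(8*(x*(x-1)*(x-2)*(x-3))) > 93/100/x^2"
proof -
  have p1: "x - 1 > 0" "x - 2 > 0" "x - 3 > 0" "x > 0" using x by auto
  have den: "8*(x*(x-1)*(x-2)*(x-3)) > 0" using p1 by simp
  have "93/100/x^2 = 93/(100*x^2)" by simp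
  have poly: "100*x^2*(8*(x-2)*(x-3) - 12*(x-3) - 9) - 93*(8*(x*(x-1)*(x-2)*(x-3))) = x*(56*x^3 - 736*x^2 - 684*x + 4464)"
    by (simp add: algebra_simps power2_eq_square power3_eq_cube)
  have "x*(56*x^3 - 736*x^2 - 684*x + 4464) > 0" using poly_pos[OF x] p1 by simp
  then have ineq: "93*(8*(x*(x-1)*(x-2)*(x-3))) < (8*(x-2)*(x-3) - 12*(x-3) - 9) * (100*x^2)"
    using poly by (simp add: algebra_simps)
  have "93/(100*x^2) < (8*(x-2)*(x-3) - 12*(x-3) - 9) / (8*(x*(x-1)*(x-2)*(x-3)))"
  proof -
    define D where "D = 8*(x*(x-1)*(x-2)*(x-3))"
    define B where "B = 100*x^2"
    define Q where "Q = 8*(x-2)*(x-3) - 12*(x-3) - 9"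
    have Dp: "D > 0" "B > 0" unfolding D_def B_def using den p1 by auto
    have "93 * D < Q * B" using ineq unfolding D_def B_def Q_def .
    then have "93 / B < Q / D" using Dp by (simp add: frac_less_eq divide_neg_pos)
    then show ?thesis unfolding D_def B_def Q_def .
  qed
  then show ?thesis using core_gen[OF p1(4,1,2,3)] by simp
qed

lemma key_gen:
  fixes x a b c g :: real assumes p: "x > 0" "a > 0" "b > 0" "c > 0" and g: "g > 0"
    and core: "1/(x*a) - 3/(2*(x*a*b)) - 9/(8*(x*a*b*c)) > 93/100/x^2"
  shows "x*(g/x)^2 + x*a/2*(3*(g/(x*a))^2)
     - (x*(a*(g/(x*a))^2 + a*b/2*(3*(g/(x*a*b))^2))
        + x*a/2*(b*(3*(g/(x*a*b))^2) + b*c/2*(9*(g/(x*a*b*c))^2)))/2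
     > (1/x + 93/100/x^2) * g^2"
proof -
  have e1: "x*(g/x)^2 = g^2 * (1/x)" using p by (simp add: power2_eq_square field_simps)
  have e2: "x*a/2*(3*(g/(x*a))^2) = g^2 * (3/(2*(x*a)))" using p by (simp add: power2_eq_square field_simps)
  have e3: "x*(a*(g/(x*a))^2) = g^2 * (1/(x*a))" using p by (simp add: power2_eq_square field_simps)
  have e4: "x*(a*b/2*(3*(g/(x*a*b))^2)) = g^2 * (3/(2*(x*a*b)))" using p by (simp add: power2_eq_square field_simps)
  have e5: "x*a/2*(b*(3*(g/(x*a*b))^2)) = g^2 * (3/(2*(x*a*b)))" using p by (simp add: power2_eq_square field_simps)
  have e6: "x*a/2*(b*c/2*(9*(g/(x*a*b*c))^2)) = g^2 * (9/(4*(x*a*b*c)))" using p by (simp add: power2_eq_square field_simps)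
  have g2: "g^2 > 0" using g by simp
  have c: "g^2 * (1/(x*a) - 3/(2*(x*a*b)) - 9/(8*(x*a*b*c))) > g^2 * (93/100/x^2)"
    using mult_strict_left_mono[OF core g2] .
  have hsum: "x*(a*(g/(x*a))^2 + a*b/2*(3*(g/(x*a*b))^2)) + x*a/2*(b*(3*(g/(x*a*b))^2) + b*c/2*(9*(g/(x*a*b*c))^2))
     = g^2 * (1/(x*a)) + g^2 * (3/(2*(x*a*b))) + g^2 * (3/(2*(x*a*b))) + g^2 * (9/(4*(x*a*b*c)))"
    unfolding distrib_left e3 e4 e5 e6 by simp
  have r1: "g^2 * (3/(2*(x*a))) = 3/2 * (g^2 * (1/(x*a)))" by simp
  moreover have r2: "g^2 * (9/(8*(x*a*b*c))) = (g^2 * (9/(4*(x*a*b*c)))) / 2" by simp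
  moreover have r3: "g^2 * (3/(2*(x*a*b))) = g^2 * (3/(2*(x*a*b)))" by simp
  moreover have r4: "(1/x + 93/100/x^2) * g^2 = g^2 * (1/x) + g^2 * (93/100/x^2)" by (simp add: algebra_simps)
  moreover have c': "g^2 * (1/(x*a)) - g^2 * (3/(2*(x*a*b))) - g^2 * (9/(8*(x*a*b*c))) > g^2 * (93/100/x^2)"
    using c by (simp add: right_diff_distrib)
  have lin: "\<And>A B C D F G H L::real. B = 3/2*C \<Longrightarrow> G = F/2 \<Longrightarrow> L = A+H \<Longrightarrow> H < C - D - G \<Longrightarrow> L < A + B - (C + D + D + F)/2"
    by argo
  show ?thesis unfolding e1 e2 hsum by (rule lin[OF r1 r2 r4 c'])
qed

lemma key_ineq:
  fixes x g :: real assumes x: "x \<ge> 14" and g: "g > 0"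
  shows "x*(g/x)^2 + x*(x-1)/2*(3*(g/(x*(x-1)))^2)
     - (x*((x-1)*(g/(x*(x-1)))^2 + (x-1)*(x-2)/2*(3*(g/(x*(x-1)*(x-2)))^2))
        + x*(x-1)/2*((x-2)*(3*(g/(x*(x-1)*(x-2)))^2) + (x-2)*(x-3)/2*(9*(g/(x*(x-1)*(x-2)*(x-3)))^2)))/2
     > (1/x + 93/100/x^2) * g^2"
  by (rule key_gen[OF _ _ _ _ g core_ineq[OF x]]) (use x in auto)

context pg begin

lemma sumE: "(\<Sum>j\<in>I. real (card (E j))) = x * f1^2 + real (n choose 2) * (3 * f2^2)"
proof -
  have "(\<Sum>j\<in>I. real (card (E j))) = (\<Sum>j\<in>Inl ` N. real (card (E j))) + (\<Sum>j\<in>Inr ` P2. real (card (E j)))"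
    unfolding I_def by (rule sum.union_disjoint) (use finP2 in auto)
  also have "(\<Sum>j\<in>Inl ` N. real (card (E j))) = (\<Sum>i\<in>N. real (card (E (Inl i))))"
    by (subst sum.reindex) (auto simp: inj_on_def)
  also have "\<dots> = (\<Sum>i\<in>N. f1^2)" by (rule sum.cong) (auto simp: cE1)
  also have "(\<Sum>j\<in>Inr ` P2. real (card (E j))) = (\<Sum>S\<in>P2. real (card (E (Inr S))))"
    by (subst sum.reindex) (auto simp: inj_on_def)
  also have "\<dots> = (\<Sum>S\<in>P2. 3 * f2^2)" by (rule sum.cong) (auto simp: cE2)
  finally show ?thesis using cardP2 unfolding x_def by simp
qed

lemma sumD: "(\<Sum>j\<in>I. \<Sum>k\<in>I-{j}. real (card (E j \<inter> E k)))
   = x * ((x - 1) * f2^2 + real ((n - 1) choose 2) * (3 * f3^2))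
     + real (n choose 2) * ((x - 2) * (3 * f3^2) + real ((n - 2) choose 2) * (9 * f4^2))"
proof -
  let ?h = "\<lambda>j. \<Sum>k\<in>I-{j}. real (card (E j \<inter> E k))"
  have "(\<Sum>j\<in>I. ?h j) = (\<Sum>j\<in>Inl ` N. ?h j) + (\<Sum>j\<in>Inr ` P2. ?h j)"
    unfolding I_def by (rule sum.union_disjoint) (use finP2 in auto)
  also have "(\<Sum>j\<in>Inl ` N. ?h j) = (\<Sum>i\<in>N. ?h (Inl i))"
    by (subst sum.reindex) (auto simp: inj_on_def)
  also have "\<dots> = (\<Sum>i\<in>N. (x - 1) * f2^2 + real ((n - 1) choose 2) * (3 * f3^2))"
    by (rule sum.cong) (auto simp: inner1)
  also have "(\<Sum>j\<in>Inr ` P2. ?h j) = (\<Sum>S\<in>P2. ?h (Inr S))"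
    by (subst sum.reindex) (auto simp: inj_on_def)
  also have "\<dots> = (\<Sum>S\<in>P2. (x - 2) * (3 * f3^2) + real ((n - 2) choose 2) * (9 * f4^2))"
    by (rule sum.cong) (auto simp: inner2)
  finally show ?thesis using cardP2 unfolding x_def by simp
qed

lemma finE: "finite (E j)"
proof -
  have "E j \<subseteq> C \<times> C" unfolding E_def Fx_def St_def by (auto split: sum.splits)
  then show ?thesis using finC finite_subset by blast
qed

lemma gpos: "g > 0" unfolding g_def using finC id_C card_gt_0_iff by fastforce

lemma ch: "real (n choose 2) = x * (x - 1) / 2" "real ((n - 1) choose 2) = (x - 1) * (x - 2) / 2"
  "real ((n - 2) choose 2) = (x - 2) * (x - 3) / 2"
  using n14 unfolding x_def real_choose2 by (auto simp: of_nat_diff algebra_simps)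

lemma union_lb: "real (card (\<Union>j\<in>I. E j)) > (1/x + 93/100/x^2) * g^2"
proof -
  have "real (card (\<Union>j\<in>I. E j)) \<ge> (\<Sum>j\<in>I. real (card (E j))) - (\<Sum>j\<in>I. \<Sum>k\<in>I-{j}. real (card (E j \<inter> E k))) / 2"
    by (rule bonferroni[OF finI finE])
  moreover have "(\<Sum>j\<in>I. real (card (E j))) - (\<Sum>j\<in>I. \<Sum>k\<in>I-{j}. real (card (E j \<inter> E k))) / 2
     > (1/x + 93/100/x^2) * g^2"
    unfolding sumE sumD ch f1_def f2_def f3_def f4_def using key_ineq[OF x14 gpos] by simp
  ultimately show ?thesis by linarith
qed

end


context pg begin

lemma evq2: assumes "q0 permutes N" "finite Z" "card Z \<le> 6"
  shows "\<exists>q\<in>C. \<forall>z\<in>Z. q z = q0 z"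
proof -
  have "card Z + 2 \<le> n" using assms n14 by linarith
  then obtain u v where uv: "u \<in> N" "v \<in> N" "u \<noteq> v" "u \<notin> Z" "v \<notin> Z" using avoid2[OF assms(2)] by blast
  obtain q where "q \<in> C" "\<forall>x. x \<noteq> u \<and> x \<noteq> v \<longrightarrow> q x = q0 x" using evq[OF assms(1) uv(1-3)] by blast
  then show ?thesis using uv by metis
qed

lemma card5: "card {a,b,c,d,e::nat} \<le> 6" by (auto simp: card_insert_if)

lemma maxFx: assumes i: "i \<in> N" shows "maximal_subgroup (Fx C {i}) X"
  unfolding maximal_subgroup_def
proof (intro conjI allI impI)
  show "subgroup (Fx C {i}) X" by (rule sub_Fx)
  obtain j where j: "j \<in> N" "j \<noteq> i" using free4[of i i i i] by blast
  obtain u v where uv: "u \<in> N" "v \<in> N" "u \<noteq> v" "u \<noteq> i" "u \<noteq> j" "v \<noteq> i" "v \<noteq> j" using free4[of i j i i] by blast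
  have t: "tau i j u v \<in> C" using tau_C i j uv by auto
  have "tau i j u v i = j" using tau_a uv by auto
  then have "tau i j u v \<notin> Fx C {i}" using j unfolding Fx_def by auto
  then show "Fx C {i} \<noteq> C" using t by blast
next
  fix H assume a: "subgroup H X \<and> Fx C {i} \<subseteq> H"
  then have sH: "subgroup H X" and MH: "Fx C {i} \<subseteq> H" by auto
  show "H = Fx C {i} \<or> H = C"
  proof (cases "H = Fx C {i}")
    case True then show ?thesis by simp
  next
    case False
    then have ne: "H \<noteq> Fx C {i}" .
    then obtain h where h: "h \<in> H" "h \<notin> Fx C {i}" using MH by blast
    have hC: "h \<in> C" using h sub_C[OF sH] by blast
    have hi: "h i \<noteq> i" using h hC unfolding Fx_def by auto
    have hiN: "h i \<in> N" using permutes_in_image[OF carr[OF hC], of i] i by blast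
    have tr: "\<exists>k\<in>H. k i = y" if y: "y \<in> N" for y
    proof (cases "y = i")
      case True show ?thesis by (rule bexI[of _ id]) (use True sub_id[OF sH] in auto)
    next
      case False
      have q0: "transpose (h i) y permutes N" using hiN y by (simp add: permutes_swap_id)
      obtain q where q: "q \<in> C" "\<forall>z\<in>{i, h i}. q z = transpose (h i) y z"
        using evq2[OF q0 _ card5[of i "h i" i i i]] by auto
      have "q i = i" using q False hi by simp
      then have "q \<in> Fx C {i}" using q unfolding Fx_def by simp
      then have "q \<circ> h \<in> H" using sub_comp[OF sH] MH h by blast
      moreover have "(q \<circ> h) i = y" using q by simp
      ultimately show ?thesis by blast
    qed
    have "card N * card (Fx C {i}) \<le> card H"
    proof (rule orbit_card[where act = "\<lambda>k z. k z" and xzero = i])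
      show "finite H" using finite_subset[OF sub_C[OF sH] finC] .
      show "Fx C {i} \<subseteq> H" by (rule MH)
      show "k \<circ> m \<in> H" if "k \<in> H" "m \<in> Fx C {i}" for k m using sub_comp[OF sH] that MH by blast
      show "inj k" if "k \<in> H" for k using inj_C sub_C[OF sH] that by blast
      show "\<exists>k\<in>H. k i = y" if "y \<in> N" for y using tr that .
      show "(k \<circ> m) i = k i" if "k \<in> H" "m \<in> Fx C {i}" for k m using that unfolding Fx_def by simp
    qed
    moreover have "card N * card (Fx C {i}) = card C" using fxc[of "{i}"] i by (simp add: ff_def mult.commute)
    ultimately have "card C \<le> card H" by simp
    then have "H = C" using sub_C[OF sH] finC by (simp add: card_seteq)
    then show ?thesis by simp
  qed
qed

lemma intransFx: assumes i: "i \<in> N" shows "intransitive_on n (Fx C {i})"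
proof -
  obtain j where j: "j \<in> N" "j \<noteq> i" using free4[of i i i i] by blast
  have "\<forall>h\<in>Fx C {i}. h i \<noteq> j" using j unfolding Fx_def by auto
  then show ?thesis unfolding intransitive_on_def using i j by blast
qed

end


context pg begin

lemma conjSt: assumes sH: "subgroup H X" and MH: "St C S \<subseteq> H" and k: "k \<in> H"
  and q: "q \<in> C" and qT: "q ` (k ` S) = k ` S"
  shows "q \<in> H"
proof -
  have kC: "k \<in> C" using k sub_C[OF sH] by blast
  define ik where "ik = inv\<^bsub>X\<^esub> k"
  have ikH: "ik \<in> H" unfolding ik_def using sub_inv[OF sH k] .
  have ikC: "ik \<in> C" unfolding ik_def using invC(1)[OF kC] .
  have l: "ik (k w) = w" for w using invC(2)[OF kC] unfolding ik_def by (metis comp_apply id_apply)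
  have r: "k (ik w) = w" for w using invC(3)[OF kC] unfolding ik_def by (metis comp_apply id_apply)
  define rr where "rr = ik \<circ> q \<circ> k"
  have rC: "rr \<in> C" unfolding rr_def using comp_C ikC q kC by blast
  have "rr ` S = ik ` (q ` (k ` S))" unfolding rr_def by (simp add: image_comp)
  also have "\<dots> = ik ` (k ` S)" using qT by simp
  also have "\<dots> = S" using l by (simp add: image_comp)
  finally have "rr \<in> St C S" using rC unfolding St_def by simp
  then have rH: "rr \<in> H" using MH by blast
  have "q = k \<circ> rr \<circ> ik" unfolding rr_def by (rule ext) (simp add: r)
  then show ?thesis using sub_comp[OF sH] k rH ikH by metis
qed

lemma pair_eq: "x1 \<in> {a,b} \<Longrightarrow> y1 \<in> {a,b} \<Longrightarrow> x1 \<noteq> y1 \<Longrightarrow> {x1,y1} = {a,b::nat}"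
  by auto

lemma CN: "k \<in> C \<Longrightarrow> z \<in> N \<Longrightarrow> k z \<in> N"
  using permutes_in_image[OF carr] by blast

lemma maxSt: assumes ab: "a \<in> N" "b \<in> N" "a \<noteq> b" shows "maximal_subgroup (St C {a,b}) X"
  unfolding maximal_subgroup_def
proof (intro conjI allI impI)
  show "subgroup (St C {a,b}) X" by (rule sub_St)
  obtain c where c: "c \<in> N" "c \<noteq> a" "c \<noteq> b" using free4[of a b a a] by blast
  obtain u v where uv: "u \<in> N" "v \<in> N" "u \<noteq> v" "u \<noteq> a" "u \<noteq> b" "u \<noteq> c" "v \<noteq> a" "v \<noteq> b" "v \<noteq> c"
    using free4[of a b c c] by blast
  have t: "tau a c u v \<in> C" using tau_C ab c uv by auto
  have "tau a c u v a = c" using tau_a uv by auto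
  then have "c \<in> tau a c u v ` {a,b}" by force
  then have "tau a c u v \<notin> St C {a,b}" using c unfolding St_def by auto
  then show "St C {a,b} \<noteq> C" using t by blast
next
  fix H assume a: "subgroup H X \<and> St C {a,b} \<subseteq> H"
  then have sH: "subgroup H X" and MH: "St C {a,b} \<subseteq> H" by auto
  define S where "S = {a,b}"
  show "H = St C {a,b} \<or> H = C"
  proof (cases "H = St C {a,b}")
    case True then show ?thesis by simp
  next
    case False
    then obtain h where h: "h \<in> H" "h \<notin> St C {a,b}" using MH by blast
    have hC: "h \<in> C" using h sub_C[OF sH] by blast
    have HC: "H \<subseteq> C" using sub_C[OF sH] .
    define Orb where "Orb = {T. \<exists>k\<in>H. k ` S = T}"
    have SO: "S \<in> Orb" unfolding Orb_def
    proof (rule CollectI, rule bexI[of _ id])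
      show "id \<in> H" using sub_id[OF sH] .
    qed simp
    have mv: "q ` T \<in> Orb" if T: "T \<in> Orb" "q \<in> H" for T q
    proof -
      obtain k where k: "k \<in> H" "k ` S = T" using T(1) unfolding Orb_def by blast
      have "(q \<circ> k) ` S = q ` (k ` S)" by (simp only: image_comp)
      then have "(q \<circ> k) ` S = q ` T" using k(2) by simp
      then show ?thesis unfolding Orb_def using sub_comp[OF sH T(2) k(1)] by blast
    qed
    have cj: "q \<in> H" if T: "T \<in> Orb" "q \<in> C" "q ` T = T" for T q
    proof -
      obtain k where k: "k \<in> H" "k ` S = T" using T(1) unfolding Orb_def by blast
      show ?thesis using conjSt[OF sH MH[folded S_def] k(1) T(2)] T(3) k(2) by simp
    qed
    have StH: "q \<in> H" if "q \<in> C" "q ` S = S" for q using MH that unfolding St_def S_def by blast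
    have stepA: "\<exists>s0 e0. s0 \<in> S \<and> e0 \<in> N \<and> e0 \<notin> S \<and> {s0,e0} \<in> Orb"
    proof -
      have S'O: "{h a, h b} \<in> Orb" using mv[OF SO h(1)] unfolding S_def by simp
      have hab: "h a \<noteq> h b" using inj_C[OF hC] ab(3) by (metis injD)
      have hN: "h a \<in> N" "h b \<in> N" using CN hC ab by auto
      have hS: "{h a, h b} \<noteq> S" using h(2) hC unfolding St_def S_def by auto
      show ?thesis
      proof (cases "h a \<in> S \<or> h b \<in> S")
        case True
        show ?thesis
        proof (cases "h a \<in> S")
          case ha: True
          then have "h b \<notin> S" using hS hab pair_eq unfolding S_def by blast
          then show ?thesis using ha hN S'O by blast
        next
          case ha: False
          then have "h b \<in> S" using True by blast
          then show ?thesis using ha hN S'O by (metis insert_commute)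
        qed
      next
        case False
        define cc where "cc = h a"
        define dd where "dd = h b"
        obtain e where e: "e \<in> N" "e \<noteq> a" "e \<noteq> b" "e \<noteq> cc" "e \<noteq> dd" using free4[of a b cc dd] by blast
        have q0: "transpose b e permutes N" using ab e by (simp add: permutes_swap_id)
        obtain q where q: "q \<in> C" "\<forall>z\<in>{a,b,cc,dd,e}. q z = transpose b e z"
          using evq2[OF q0 _ card5[of a b cc dd e]] by blast
        have ccS: "cc \<noteq> a" "cc \<noteq> b" "dd \<noteq> a" "dd \<noteq> b" using False unfolding cc_def dd_def S_def by auto
        have qv: "q a = a" "q b = e" "q cc = cc" "q dd = dd" using q ab(3) e ccS by auto
        have "q ` {cc,dd} = {cc,dd}" using qv by simp
        then have qH: "q \<in> H" using cj[OF S'O[folded cc_def dd_def] q(1)] by simp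
        have "q ` S = {a, e}" using qv unfolding S_def by simp
        then have "{a,e} \<in> Orb" using mv[OF SO qH] by simp
        then show ?thesis using e unfolding S_def by blast
      qed
    qed
    then obtain s0 e0 where se0: "s0 \<in> S" "e0 \<in> N" "e0 \<notin> S" "{s0,e0} \<in> Orb" by blast
    have stepB: "{s,e} \<in> Orb" if se: "s \<in> S" "e \<in> N" "e \<notin> S" for s e
    proof -
      define q0 where "q0 = transpose e0 e \<circ> transpose s0 s"
      have sN: "s \<in> N" "s0 \<in> N" using se se0 ab unfolding S_def by auto
      have q0p: "q0 permutes N" unfolding q0_def using se se0 sN
        by (intro permutes_compose permutes_swap_id) auto
      obtain q where q: "q \<in> C" "\<forall>z\<in>{a,b,e0,e,e}. q z = q0 z"
        using evq2[OF q0p _ card5[of a b e0 e e]] by blast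
      have ne: "e0 \<noteq> a" "e0 \<noteq> b" "e \<noteq> a" "e \<noteq> b" using se se0 unfolding S_def by auto
      have q0a: "q0 a \<in> S" "q0 b \<in> S" using se se0 ne unfolding q0_def S_def by (auto simp: transpose_def)
      have q0ab: "q0 a \<noteq> q0 b" using permutes_inj[OF q0p] ab(3) by (metis injD)
      have "q ` S = {q0 a, q0 b}" using q unfolding S_def by simp
      also have "\<dots> = S" using pair_eq[of "q0 a" a b "q0 b"] q0a q0ab unfolding S_def by simp
      finally have qH: "q \<in> H" using StH q(1) by blast
      have s0S: "s0 = a \<or> s0 = b" using se0 unfolding S_def by auto
      have "q s0 = q0 s0" "q e0 = q0 e0" using q s0S by auto
      moreover have "q0 s0 = s" "q0 e0 = e" using se se0 ne unfolding q0_def S_def by (auto simp: transpose_def)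
      ultimately have "q ` {s0,e0} = {s,e}" by simp
      then show ?thesis using mv[OF se0(4) qH] by simp
    qed
    have stepC: "{c,d} \<in> Orb" if cd: "c \<in> N" "d \<in> N" "c \<notin> S" "d \<notin> S" "c \<noteq> d" for c d
    proof -
      have aS: "a \<in> S" "b \<in> S" unfolding S_def by auto
      have UO: "{a,c} \<in> Orb" using stepB[OF aS(1) cd(1,3)] .
      have WO: "{b,c} \<in> Orb" using stepB[OF aS(2) cd(1,3)] .
      have q0: "transpose b d permutes N" using ab cd by (simp add: permutes_swap_id)
      obtain q where q: "q \<in> C" "\<forall>z\<in>{a,b,c,d,d}. q z = transpose b d z"
        using evq2[OF q0 _ card5[of a b c d d]] by blast
      have ne: "c \<noteq> a" "c \<noteq> b" "d \<noteq> a" "d \<noteq> b" using cd unfolding S_def by auto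
      have qv: "q a = a" "q b = d" "q c = c" using q ab(3) ne cd(5) by auto
      have "q ` {a,c} = {a,c}" using qv by simp
      then have qH: "q \<in> H" using cj[OF UO q(1)] by simp
      have "q ` {b,c} = {c,d}" using qv by auto
      then show ?thesis using mv[OF WO qH] by simp
    qed
    have allO: "T \<in> Orb" if T: "T \<in> P2" for T
    proof -
      obtain c d where cd: "T = {c,d}" "c \<noteq> d" "c \<in> N" "d \<in> N" using P2E[OF T] .
      show ?thesis
      proof (cases "c \<in> S")
        case cS: True
        show ?thesis
        proof (cases "d \<in> S")
          case True
          then have "T = S" using cd cS pair_eq unfolding S_def by blast
          then show ?thesis using SO by simp
        next
          case False then show ?thesis using stepB[OF cS cd(4)] cd by simp
        qed
      next
        case cS: False
        show ?thesis
        proof (cases "d \<in> S")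
          case True then show ?thesis using stepB[OF True cd(3) cS] cd by (simp add: insert_commute)
        next
          case False then show ?thesis using stepC[OF cd(3,4) cS False cd(2)] cd by simp
        qed
      qed
    qed
    have "card P2 * card (St C S) \<le> card H"
    proof (rule orbit_card[where act = "\<lambda>k T. k ` T" and xzero = S])
      show "finite H" using finite_subset[OF HC finC] .
      show "St C S \<subseteq> H" using MH unfolding S_def .
      show "k \<circ> m \<in> H" if "k \<in> H" "m \<in> St C S" for k m using sub_comp[OF sH] that MH unfolding S_def by blast
      show "inj k" if "k \<in> H" for k using inj_C HC that by blast
      show "\<exists>k\<in>H. k ` S = y" if "y \<in> P2" for y using allO[OF that] unfolding Orb_def by blast
      show "(k \<circ> m) ` S = k ` S" if "k \<in> H" "m \<in> St C S" for k m
      proof -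
        have "(k \<circ> m) ` S = k ` (m ` S)" by (simp only: image_comp)
        then show ?thesis using that unfolding St_def by simp
      qed
    qed
    moreover have "real (card P2 * card (St C S)) = g"
    proof -
      have e1: "real (card P2) = x * (x - 1) / 2" using cardP2 ch(1) by simp
      have e2: "real (card (St C S)) = 2 * f2" unfolding S_def using cSt[OF ab] .
      have nz: "x * (x - 1) \<noteq> 0" using x14 by simp
      have "real (card P2 * card (St C S)) = (x * (x - 1) / 2) * (2 * (g / (x * (x - 1))))"
        unfolding of_nat_mult e1 e2 f2_def ..
      also have "\<dots> = g" using nz by (simp add: field_simps)
      finally show ?thesis .
    qed
    ultimately have "card C \<le> card H" unfolding g_def by linarith
    then have "H = C" using HC finC by (simp add: card_seteq)
    then show ?thesis by simp
  qed
qed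

lemma intransSt: assumes ab: "a \<in> N" "b \<in> N" shows "intransitive_on n (St C {a,b})"
proof -
  obtain c where c: "c \<in> N" "c \<noteq> a" "c \<noteq> b" using free4[of a b a a] by blast
  have "\<forall>h\<in>St C {a,b}. h a \<noteq> c"
  proof
    fix h assume "h \<in> St C {a,b}"
    then have "h a \<in> {a,b}" unfolding St_def by blast
    then show "h a \<noteq> c" using c by auto
  qed
  then show ?thesis unfolding intransitive_on_def using ab c by blast
qed

end


context pg begin

lemma good: assumes j: "j \<in> I" and z: "z \<in> E j"
  shows "\<exists>M. maximal_subgroup M X \<and> intransitive_on n M \<and> generate X {fst z, snd z} \<subseteq> M"
proof (cases j)
  case (Inl i)
  have i: "i \<in> N" using j Inl unfolding I_def by auto
  have "{fst z, snd z} \<subseteq> Fx C {i}" using z Inl unfolding E_def by (auto simp: mem_Times_iff)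
  then have "generate X {fst z, snd z} \<subseteq> Fx C {i}" using group.generate_subgroup_incl[OF grp _ sub_Fx] by blast
  then show ?thesis using maxFx[OF i] intransFx[OF i] by blast
next
  case (Inr S)
  have S: "S \<in> P2" using j Inr unfolding I_def by auto
  obtain a b where ab: "S = {a,b}" "a \<noteq> b" "a \<in> N" "b \<in> N" using P2E[OF S] .
  have "{fst z, snd z} \<subseteq> St C S" using z Inr unfolding E_def by (auto simp: mem_Times_iff)
  then have "generate X {fst z, snd z} \<subseteq> St C S" using group.generate_subgroup_incl[OF grp _ sub_St] by blast
  then show ?thesis using maxSt[OF ab(3,4,2)] intransSt[OF ab(3,4)] ab(1) by blast
qed

lemma main: "p_intrans n X > 1 / real n + 0.93 / (real n)^2"
proof -
  define G where "G = {(p, q) \<in> C \<times> C. \<exists>M. maximal_subgroup M X \<and> intransitive_on n M \<and> generate X {p, q} \<subseteq> M}"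
  have sub: "(\<Union>j\<in>I. E j) \<subseteq> G"
  proof
    fix z assume "z \<in> (\<Union>j\<in>I. E j)"
    then obtain j where j: "j \<in> I" "z \<in> E j" by blast
    have "E j \<subseteq> C \<times> C" unfolding E_def Fx_def St_def by (auto split: sum.splits)
    then have "z \<in> C \<times> C" using j by blast
    then show "z \<in> G" using good[OF j] unfolding G_def by (cases z) auto
  qed
  have finG: "finite G" unfolding G_def using finC by (auto intro: finite_subset[of _ "C \<times> C"])
  have "card (\<Union>j\<in>I. E j) \<le> card G" using card_mono[OF finG sub] .
  then have "real (card G) > (1/x + 93/100/x^2) * g^2" using union_lb by linarith
  moreover have "p_intrans n X = real (card G) / g^2" unfolding p_intrans_def G_def g_def by simp
  moreover have "g^2 > 0" using gpos by simp
  ultimately have "p_intrans n X > 1/x + 93/100/x^2" by (simp add: pos_less_divide_eq)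
  then show ?thesis unfolding x_def by simp
qed

end

lemma pg_sym: "n \<ge> 14 \<Longrightarrow> pg n (sym_group n)"
proof (rule pg.intro)
  fix q u v assume "q permutes {1..n}"
  then show "q \<in> carrier (sym_group n) \<or> q \<circ> transpose u v \<in> carrier (sym_group n)"
    by (simp add: sym_group_carrier)
next
  fix a b u v assume "a \<in> {1..n}" "b \<in> {1..n}" "u \<in> {1..n}" "v \<in> {1..n}"
  then show "transpose a b \<circ> transpose u v \<in> carrier (sym_group n)"
    by (simp add: sym_group_carrier permutes_compose permutes_swap_id)
next
  fix K assume "K \<subseteq> {1..n}"
  then show "card (Fx (carrier (sym_group n)) K) * ff n (card K) = card (carrier (sym_group n))"
    by (rule card_Fx_sym)
qed (auto simp: sym_group_is_group sym_group_carrier sym_group_mult sym_group_one)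

lemma pg_alt: "n \<ge> 14 \<Longrightarrow> pg n (alt_group n)"
proof (rule pg.intro)
  fix q u v assume q: "q permutes {1..n}" and uv: "u \<in> {1..n}" "v \<in> {1..n}" "u \<noteq> v"
  have pq: "permutation q" using permutes_imp_permutation[OF _ q] by simp
  have "evenperm (q \<circ> transpose u v) = (evenperm q = evenperm (transpose u v))"
    using evenperm_comp[OF pq permutation_swap_id] .
  then have "evenperm q \<or> evenperm (q \<circ> transpose u v)" using evenperm_swap[of u v] uv(3) by auto
  moreover have "q \<circ> transpose u v permutes {1..n}" using q uv by (simp add: permutes_compose permutes_swap_id)
  ultimately show "q \<in> carrier (alt_group n) \<or> q \<circ> transpose u v \<in> carrier (alt_group n)"
    using q by (auto simp: alt_group_carrier)
next
  fix a b u v assume "a \<in> {1..n}" "b \<in> {1..n}" "u \<in> {1..n}" "v \<in> {1..n}" "a \<noteq> b" "u \<noteq> v"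
  moreover have "evenperm (transpose a b \<circ> transpose u v) = (evenperm (transpose a b) = evenperm (transpose u v))"
    using evenperm_comp[OF permutation_swap_id permutation_swap_id] .
  ultimately show "transpose a b \<circ> transpose u v \<in> carrier (alt_group n)"
    by (simp add: alt_group_carrier permutes_compose permutes_swap_id evenperm_swap)
next
  fix K assume "n \<ge> 14" "K \<subseteq> {1..n}" "card K \<le> 4"
  then show "card (Fx (carrier (alt_group n)) K) * ff n (card K) = card (carrier (alt_group n))"
    by (intro card_Fx_alt) auto
qed (auto simp: alt_group_is_group alt_group_carrier alt_group_mult alt_group_one)

theorem lemma2p3:
  fixes n :: nat and X :: "(nat \<Rightarrow> nat) monoid"
  assumes "n \<ge> 14"
    and "X = alt_group n \<or> X = sym_group n"
  shows "p_intrans n X > 1 / real n + 0.93 / (real n)^2"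
  using assms pg.main pg_alt pg_sym by metis



end
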